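(* Let $n\ge 2$ and $\alpha\in[0,1]$. If $T$ is a tree of order $n$, then \[ \rho(A_\alpha(T))\le\frac{\alpha n+\sqrt{\alpha^2n^2+4(n-1)(1-2\alpha)}}{2}, \] with equality if and only if $T$ is the star $K_{1,n-1}$.
   Context: For a graph $G$ let $A(G)$ be its adjacency matrix and $D(G)$ the diagonal matrix of its vertex degrees. For $\alpha\in[0,1]$ define $A_\alpha(G)=\alpha D(G)+(1-\alpha)A(G)$. $\rho(M)$ denotes the spectral radius (largest eigenvalue) of a real symmetric nonnegative matrix $M$. *)

theory Defs
  imports "HOL-Analysis.Analysis"
begin

definition simple_graph :: "('v \<Rightarrow> 'v \<Rightarrow> bool) \<Rightarrow> bool" where
  "simple_graph E \<longleftrightarrow> (\<forall>u v. E u v \<longrightarrow> E v u) \<and> (\<forall>u. \<not> E u u)"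

definition connected_graph :: "('v \<Rightarrow> 'v \<Rightarrow> bool) \<Rightarrow> bool" where
  "connected_graph E \<longleftrightarrow> (\<forall>u v. E\<^sup>*\<^sup>* u v)"

definition is_cycle :: "('v \<Rightarrow> 'v \<Rightarrow> bool) \<Rightarrow> 'v list \<Rightarrow> bool" where
  "is_cycle E vs \<longleftrightarrow> length vs \<ge> 3 \<and> distinct vs \<and>
     (\<forall>i. i + 1 < length vs \<longrightarrow> E (vs ! i) (vs ! (i + 1))) \<and> E (last vs) (hd vs)"

definition is_tree :: "('v \<Rightarrow> 'v \<Rightarrow> bool) \<Rightarrow> bool" where
  "is_tree E \<longleftrightarrow> simple_graph E \<and> connected_graph E \<and> (\<nexists>vs. is_cycle E vs)"

definition is_star :: "('v \<Rightarrow> 'v \<Rightarrow> bool) \<Rightarrow> bool" where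
  "is_star E \<longleftrightarrow> (\<exists>c. \<forall>u v. E u v \<longleftrightarrow> u \<noteq> v \<and> (u = c \<or> v = c))"

definition degree :: "('v::finite \<Rightarrow> 'v \<Rightarrow> bool) \<Rightarrow> 'v \<Rightarrow> nat" where
  "degree E u = card {v. E u v}"

definition adj_matrix :: "('v::finite \<Rightarrow> 'v \<Rightarrow> bool) \<Rightarrow> real^'v^'v" where
  "adj_matrix E = (\<chi> i j. if E i j then 1 else 0)"

definition deg_matrix :: "('v::finite \<Rightarrow> 'v \<Rightarrow> bool) \<Rightarrow> real^'v^'v" where
  "deg_matrix E = (\<chi> i j. if i = j then real (degree E i) else 0)"

definition A_alpha :: "real \<Rightarrow> ('v::finite \<Rightarrow> 'v \<Rightarrow> bool) \<Rightarrow> real^'v^'v" where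
  "A_alpha \<alpha> E = \<alpha> *\<^sub>R deg_matrix E + (1 - \<alpha>) *\<^sub>R adj_matrix E"

text \<open>Spectral radius of a real symmetric matrix = its largest (real) eigenvalue.\<close>
definition spectral_radius_sym :: "real^'n^'n \<Rightarrow> real" where
  "spectral_radius_sym M = Max {l. \<exists>x. x \<noteq> 0 \<and> M *v x = l *\<^sub>R x}"

end

theory Submission
  imports Defs
begin

lemma sym_inner:
  fixes M :: "real^'n^'n"
  assumes "transpose M = M"
  shows "(M *v x) \<bullet> y = x \<bullet> (M *v y)"
proof -
  have "(M *v x) \<bullet> y = (x v* M) \<bullet> y"
    by (metis assms transpose_matrix_vector)
  also have "\<dots> = x \<bullet> (M *v y)" by (rule dot_lmul_matrix)
  finally show ?thesis .
qed

lemma sym_eigen_exists: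
  fixes M :: "real^'n^'n"
  assumes sym: "transpose M = M"
  shows "\<exists>l x. x \<noteq> 0 \<and> M *v x = l *\<^sub>R x"
proof -
  define q where "q y = y \<bullet> (M *v y)" for y :: "real^'n"
  have cq: "continuous_on (sphere 0 1) q"
    unfolding q_def by (intro continuous_intros)
  have ne: "sphere (0::real^'n) 1 \<noteq> {}"
  proof -
    obtain b :: "real^'n" where "b \<in> Basis" using nonempty_Basis by blast
    hence "b \<in> sphere 0 1" by simp
    thus ?thesis by blast
  qed
  obtain x where xK: "x \<in> sphere 0 1" and xmax: "\<And>y. y \<in> sphere 0 1 \<Longrightarrow> q y \<le> q x"
    using continuous_attains_sup[OF compact_sphere ne cq] by blast
  define \<mu> where "\<mu> = q x"
  have nx: "x \<bullet> x = 1" using xK by (simp add: dot_square_norm)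
  have qscale: "q (c *\<^sub>R y) = c^2 * q y" for c y
    by (simp add: q_def power2_eq_square matrix_vector_mult_scaleR)
  have all: "q y \<le> \<mu> * (y \<bullet> y)" for y
  proof (cases "y = 0")
    case True then show ?thesis by (simp add: q_def)
  next
    case False
    hence "(1 / norm y) *\<^sub>R y \<in> sphere 0 1" by simp
    hence "q ((1 / norm y) *\<^sub>R y) \<le> \<mu>" using xmax \<mu>_def by blast
    hence "(1/norm y)^2 * q y \<le> \<mu>" by (simp add: qscale)
    moreover have "norm y > 0" using False by simp
    ultimately have "q y \<le> \<mu> * (norm y)^2"
      by (simp add: field_simps power2_eq_square)
    then show ?thesis by (simp add: dot_square_norm)
  qed
  define w where "w = M *v x - \<mu> *\<^sub>R x"
  define c where "c = \<mu> * (w \<bullet> w) - q w"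
  have xw: "x \<bullet> (M *v w) = w \<bullet> (M *v x)"
    by (metis sym sym_inner inner_commute)
  have "w \<bullet> (M *v x) - \<mu> * (x \<bullet> w) = w \<bullet> w"
    unfolding w_def by (simp add: inner_diff_left inner_diff_right inner_commute algebra_simps)
  have key: "0 \<le> t^2 * c - 2 * t * (w \<bullet> w)" for t
  proof -
    have "q (x + t *\<^sub>R w) \<le> \<mu> * ((x + t *\<^sub>R w) \<bullet> (x + t *\<^sub>R w))" by (rule all)
    moreover have "q (x + t *\<^sub>R w) = \<mu> + 2 * t * (w \<bullet> (M *v x)) + t^2 * q w"
      unfolding q_def \<mu>_def using xw
      by (simp add: matrix_vector_right_distrib inner_add_left inner_add_right  power2_eq_square algebra_simps q_def)
    moreover have "(x + t *\<^sub>R w) \<bullet> (x + t *\<^sub>R w) = 1 + 2 * t * (x \<bullet> w) + t^2 * (w \<bullet> w)"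
      using nx by (simp add: inner_add_left inner_add_right inner_commute power2_eq_square algebra_simps)
    moreover have "w \<bullet> (M *v x) - \<mu> * (x \<bullet> w) = w \<bullet> w"
      unfolding w_def by (simp add: inner_diff_left inner_diff_right inner_commute algebra_simps)
    ultimately show ?thesis unfolding c_def using nx inner_commute[of w x] by (simp add: algebra_simps power2_eq_square)
  qed
  have "w \<bullet> w = 0"
  proof (cases "c \<le> 0")
    case True
    have "0 \<le> c - 2 * (w \<bullet> w)" using key[of 1] by simp
    then show ?thesis using True inner_ge_zero[of w] by linarith
  next
    case False
    have "0 \<le> ((w \<bullet> w)/c)^2 * c - 2 * ((w \<bullet> w)/c) * (w \<bullet> w)" using key by blast
    hence "0 \<le> - ((w \<bullet> w)^2 / c)" using False by (simp add: power2_eq_square field_simps)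
    hence "(w \<bullet> w)^2 \<le> 0" using False by (simp add: field_simps)
    then show ?thesis by simp
  qed
  hence "M *v x = \<mu> *\<^sub>R x" unfolding w_def by simp
  moreover have "x \<noteq> 0" using nx by auto
  ultimately show ?thesis by blast
qed

lemma sym_eigen_finite:
  fixes M :: "real^'n^'n"
  assumes sym: "transpose M = M"
  shows "finite {l. \<exists>x. x \<noteq> 0 \<and> M *v x = l *\<^sub>R x}" (is "finite ?S")
proof (rule ccontr)
  assume inf: "infinite ?S"
  obtain S' where S': "S' \<subseteq> ?S" "finite S'" "card S' = CARD('n) + 1"
    using infinite_arbitrarily_large[OF inf] by blast
  define f where "f l = (SOME x. x \<noteq> 0 \<and> M *v x = l *\<^sub>R x)" for l
  have f: "f l \<noteq> 0 \<and> M *v f l = l *\<^sub>R f l" if "l \<in> ?S" for l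
    using that unfolding f_def by (metis (mono_tags, lifting) mem_Collect_eq someI_ex)
  have orth: "f l \<bullet> f l' = 0" if "l \<in> ?S" "l' \<in> ?S" "l \<noteq> l'" for l l'
  proof -
    have "l * (f l \<bullet> f l') = (M *v f l) \<bullet> f l'" using f[OF that(1)] by simp
    also have "\<dots> = f l \<bullet> (M *v f l')" by (rule sym_inner[OF sym])
    also have "\<dots> = l' * (f l \<bullet> f l')" using f[OF that(2)] by simp
    finally show ?thesis using that(3) by simp
  qed
  have inj: "inj_on f S'"
  proof (rule inj_onI)
    fix a b assume ab: "a \<in> S'" "b \<in> S'" "f a = f b"
    show "a = b"
    proof (rule ccontr)
      assume "a \<noteq> b"
      hence "f a \<bullet> f a = 0" using orth[of a b] ab S'(1) by auto
      thus False using f[of a] ab S'(1) by auto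
    qed
  qed
  have "pairwise orthogonal (f ` S')"
    unfolding pairwise_def orthogonal_def
  proof (intro ballI impI)
    fix a b assume "a \<in> f ` S'" "b \<in> f ` S'" "a \<noteq> b"
    then obtain l l' where "l \<in> S'" "l' \<in> S'" "a = f l" "b = f l'" by blast
    with \<open>a \<noteq> b\<close> show "a \<bullet> b = 0" using orth S'(1) by blast
  qed
  moreover have "0 \<notin> f ` S'"
  proof
    assume "0 \<in> f ` S'"
    then obtain l where "l \<in> S'" "f l = 0" by auto
    thus False using f[of l] S'(1) by blast
  qed
  ultimately have "independent (f ` S')" by (rule pairwise_orthogonal_independent)
  hence "card (f ` S') \<le> DIM(real^'n)" using independent_bound by blast
  moreover have "card (f ` S') = CARD('n) + 1" using card_image[OF inj] S' by simp
  ultimately show False by simp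
qed

lemma cyc3: "distinct [a,b,c] \<Longrightarrow> E a b \<Longrightarrow> E b c \<Longrightarrow> E c a \<Longrightarrow> is_cycle E [a,b,c]"
  unfolding is_cycle_def by (auto simp: less_Suc_eq nth_Cons')

lemma cyc4: "distinct [a,b,c,d] \<Longrightarrow> E a b \<Longrightarrow> E b c \<Longrightarrow> E c d \<Longrightarrow> E d a \<Longrightarrow> is_cycle E [a,b,c,d]"
  unfolding is_cycle_def by (auto simp: less_Suc_eq nth_Cons')

lemma cyc5: "distinct [a,b,c,d,e] \<Longrightarrow> E a b \<Longrightarrow> E b c \<Longrightarrow> E c d \<Longrightarrow> E d e \<Longrightarrow> E e a \<Longrightarrow> is_cycle E [a,b,c,d,e]"
  unfolding is_cycle_def by (auto simp: less_Suc_eq nth_Cons')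

lemma cyc6: "distinct [a,b,c,d,e,f] \<Longrightarrow> E a b \<Longrightarrow> E b c \<Longrightarrow> E c d \<Longrightarrow> E d e \<Longrightarrow> E e f \<Longrightarrow> E f a \<Longrightarrow> is_cycle E [a,b,c,d,e,f]"
  unfolding is_cycle_def by (auto simp: less_Suc_eq nth_Cons')

lemma tree_sym: "is_tree T \<Longrightarrow> T u v \<Longrightarrow> T v u"
  unfolding is_tree_def simple_graph_def by blast

lemma tree_irr: "is_tree T \<Longrightarrow> \<not> T u u"
  unfolding is_tree_def simple_graph_def by blast

lemma tree_nocyc: "is_tree T \<Longrightarrow> \<not> is_cycle T vs"
  unfolding is_tree_def by blast

lemma deg_le:
  fixes T :: "'v::finite \<Rightarrow> 'v \<Rightarrow> bool"
  assumes "is_tree T" shows "degree T u \<le> CARD('v) - 1"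
proof -
  have "{v. T u v} \<subseteq> UNIV - {u}" using tree_irr[OF assms] by auto
  hence "card {v. T u v} \<le> card (UNIV - {u} :: 'v set)" by (intro card_mono) auto
  thus ?thesis unfolding degree_def by (simp add: card_Diff_singleton)
qed

lemma deg_ge1:
  fixes T :: "'v::finite \<Rightarrow> 'v \<Rightarrow> bool"
  assumes "is_tree T" "CARD('v) \<ge> 2" shows "degree T u \<ge> 1"
proof -
  obtain w :: 'v where "w \<noteq> u"
  proof -
    have "UNIV - {u} \<noteq> {}"
    proof
      assume "UNIV - {u} = {}"
      moreover have "card (UNIV - {u} :: 'v set) = CARD('v) - 1" by (simp add: card_Diff_singleton)
      ultimately have "CARD('v) - 1 = 0" by (metis card.empty)
      thus False using assms(2) by linarith
    qed
    thus ?thesis using that by blast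
  qed
  have "T\<^sup>*\<^sup>* u w" using assms(1) unfolding is_tree_def connected_graph_def by blast
  then obtain z where "T u z" using \<open>w \<noteq> u\<close> by (metis converse_rtranclpE)
  hence "{v. T u v} \<noteq> {}" by blast
  thus ?thesis unfolding degree_def by (simp add: Suc_leI card_gt_0_iff)
qed

lemma centre_star:
  fixes T :: "'v::finite \<Rightarrow> 'v \<Rightarrow> bool"
  assumes "is_tree T" "\<And>v. v \<noteq> u \<Longrightarrow> T u v" shows "is_star T"
  unfolding is_star_def
proof (intro exI[of _ u] allI)
  fix a b show "T a b \<longleftrightarrow> a \<noteq> b \<and> (a = u \<or> b = u)"
  proof
    assume ab: "T a b"
    have "a \<noteq> b" using ab tree_irr[OF assms(1)] by blast
    moreover have "a = u \<or> b = u"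
    proof (rule ccontr)
      assume "\<not> (a = u \<or> b = u)"
      hence "a \<noteq> u" "b \<noteq> u" by auto
      have "T u a" using assms(2) \<open>a \<noteq> u\<close> by blast
      have "T b u" using assms(2) \<open>b \<noteq> u\<close> tree_sym[OF assms(1)] by blast
      have "is_cycle T [u,a,b]" using ab \<open>a \<noteq> b\<close> \<open>a \<noteq> u\<close> \<open>b \<noteq> u\<close> \<open>T u a\<close> \<open>T b u\<close> by (intro cyc3) auto
      thus False using tree_nocyc[OF assms(1)] by blast
    qed
    ultimately show "a \<noteq> b \<and> (a = u \<or> b = u)" by blast
  next
    assume "a \<noteq> b \<and> (a = u \<or> b = u)"
    thus "T a b" using assms(2) tree_sym[OF assms(1), of u a] by metis
  qed
qed

lemma deg_full_star:
  fixes T :: "'v::finite \<Rightarrow> 'v \<Rightarrow> bool"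
  assumes "is_tree T" "degree T u = CARD('v) - 1" shows "is_star T"
proof -
  have sub: "{v. T u v} \<subseteq> UNIV - {u}" using tree_irr[OF assms(1)] by auto
  have "card {v. T u v} = card (UNIV - {u} :: 'v set)"
    using assms(2) unfolding degree_def by (simp add: card_Diff_singleton)
  hence "{v. T u v} = UNIV - {u}" using sub by (intro card_subset_eq) auto
  thus ?thesis using centre_star[OF assms(1), of u] by blast
qed

lemma star_is_tree_centre:
  fixes T :: "'v::finite \<Rightarrow> 'v \<Rightarrow> bool"
  assumes "is_star T"
  obtains c where "\<And>u v. T u v \<longleftrightarrow> u \<noteq> v \<and> (u = c \<or> v = c)"
  using assms unfolding is_star_def by blast

lemma count2:
  fixes T :: "'v::finite \<Rightarrow> 'v \<Rightarrow> bool"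
  assumes tree: "is_tree T"
  shows "card (insert u ({v. T u v} \<union> (\<Union>v\<in>{v. T u v}. {w. T v w} - {u})))
         = 1 + (\<Sum>v\<in>{v. T u v}. degree T v)"
proof -
  define N where "N = {v. T u v}"
  define S where "S v = {w. T v w} - {u}" for v
  have irr: "\<And>a. \<not> T a a" using tree_irr[OF tree] by blast
  have sym: "\<And>a b. T a b \<Longrightarrow> T b a" using tree_sym[OF tree] by blast
  have nocyc: "\<And>vs. \<not> is_cycle T vs" using tree_nocyc[OF tree] by blast
  have d1: "N \<inter> (\<Union>v\<in>N. S v) = {}"
  proof (rule ccontr)
    assume "N \<inter> (\<Union>v\<in>N. S v) \<noteq> {}"
    then obtain w v where w: "T u w" "v \<in> N" "T v w" "w \<noteq> u" unfolding N_def S_def by blast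
    have uv: "T u v" using w(2) N_def by blast
    have "u \<noteq> v" "v \<noteq> w" using irr uv w by metis+
    hence "is_cycle T [u,v,w]" using uv w sym by (intro cyc3) auto
    thus False using nocyc by blast
  qed
  have d2: "\<forall>i\<in>N. \<forall>j\<in>N. i \<noteq> j \<longrightarrow> S i \<inter> S j = {}"
  proof (intro ballI impI)
    fix v v' assume vv: "v \<in> N" "v' \<in> N" "v \<noteq> v'"
    show "S v \<inter> S v' = {}"
    proof (rule ccontr)
      assume "S v \<inter> S v' \<noteq> {}"
      then obtain w where w: "T v w" "T v' w" "w \<noteq> u" unfolding S_def by blast
      have uv: "T u v" "T u v'" using vv N_def by auto
      have "u \<noteq> v" "v \<noteq> w" "u \<noteq> v'" "v' \<noteq> w" using irr uv w by metis+
      moreover have "T w v'" "T v' u" using sym w uv by blast+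
      ultimately have "is_cycle T [u,v,w,v']" using uv w vv(3) by (intro cyc4) auto
      thus False using nocyc by blast
    qed
  qed
  have uout: "u \<notin> N \<union> (\<Union>v\<in>N. S v)" using irr unfolding N_def S_def by auto
  have cS: "card (S v) + 1 = degree T v" if "v \<in> N" for v
  proof -
    have "u \<in> {w. T v w}" using that sym N_def by blast
    thus ?thesis unfolding S_def degree_def
      by (metis (no_types, lifting) One_nat_def Suc_pred add.commute card_Diff_singleton card_gt_0_iff empty_iff finite plus_1_eq_Suc)
  qed
  have "card (insert u (N \<union> (\<Union>v\<in>N. S v))) = 1 + card (N \<union> (\<Union>v\<in>N. S v))"
    using uout by simp
  also have "card (N \<union> (\<Union>v\<in>N. S v)) = card N + card (\<Union>v\<in>N. S v)"
    using d1 by (intro card_Un_disjoint) auto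
  also have "card (\<Union>v\<in>N. S v) = (\<Sum>v\<in>N. card (S v))"
    using d2 by (intro card_UN_disjoint) auto
  also have "card N + (\<Sum>v\<in>N. card (S v)) = (\<Sum>v\<in>N. card (S v) + 1)"
    by (simp add: sum_Suc)
  also have "\<dots> = (\<Sum>v\<in>N. degree T v)" using cS by (intro sum.cong) auto
  finally show ?thesis unfolding N_def S_def .
qed

lemma sum_deg_le:
  fixes T :: "'v::finite \<Rightarrow> 'v \<Rightarrow> bool"
  assumes tree: "is_tree T"
  shows "(\<Sum>v\<in>{v. T u v}. degree T v) \<le> CARD('v) - 1"
proof -
  have "card (insert u ({v. T u v} \<union> (\<Union>v\<in>{v. T u v}. {w. T v w} - {u}))) \<le> CARD('v)"
    by (rule card_mono) auto
  thus ?thesis using count2[OF tree, of u] by linarith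
qed

lemma sum_deg_eq:
  fixes T :: "'v::finite \<Rightarrow> 'v \<Rightarrow> bool"
  assumes tree: "is_tree T" and eq: "(\<Sum>v\<in>{v. T u v}. degree T v) = CARD('v) - 1"
  shows "y = u \<or> T u y \<or> (\<exists>v. T u v \<and> T v y)"
proof -
  let ?U = "insert u ({v. T u v} \<union> (\<Union>v\<in>{v. T u v}. {w. T v w} - {u}))"
  have "CARD('v) \<ge> 1" by (simp add: Suc_leI)
  hence "card ?U = card (UNIV :: 'v set)" using count2[OF tree, of u] eq by linarith
  hence "?U = UNIV" by (intro card_subset_eq) auto
  hence "y \<in> ?U" by blast
  thus ?thesis by blast
qed

lemma dist2_star:
  fixes T :: "'v::finite \<Rightarrow> 'v \<Rightarrow> bool"
  assumes tree: "is_tree T"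
    and Ru: "\<And>y. y = u \<or> T u y \<or> (\<exists>z. T u z \<and> T z y)"
    and Rw: "\<And>y. y = w \<or> T w y \<or> (\<exists>z. T w z \<and> T z y)"
    and uv: "T u v" and vw: "T v w" and nuw: "\<not> T u w" and wu: "w \<noteq> u"
  shows "is_star T"
proof (rule ccontr)
  assume ns: "\<not> is_star T"
  have irr: "\<And>a. \<not> T a a" using tree_irr[OF tree] by blast
  have sym: "\<And>a b. T a b \<Longrightarrow> T b a" using tree_sym[OF tree] by blast
  have nocyc: "\<And>vs. \<not> is_cycle T vs" using tree_nocyc[OF tree] by blast
  obtain y where y: "y \<noteq> v" "\<not> T v y"
    using centre_star[OF tree, of v] ns by blast
  have yu: "y \<noteq> u" using y uv sym by blast
  have yw: "y \<noteq> w" using y vw by blast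
  have uv': "u \<noteq> v" "v \<noteq> w" using irr uv vw by metis+
  have nwu: "\<not> T w u" using nuw sym by blast
  from Ru[of y] yu obtain z where z: "T u y \<and> z = u \<or> T u z \<and> T z y" by blast
  from Rw[of y] yw obtain z' where z': "T w y \<and> z' = w \<or> T w z' \<and> T z' y" by blast
  show False
  proof (cases "T u y")
    case True note uy = True
    show False
    proof (cases "T w y")
      case True
      have "is_cycle T [u,v,w,y]" using uv vw True uy sym uv' yu yw y wu by (intro cyc4) auto
      thus False using nocyc by blast
    next
      case False
      hence wz': "T w z'" "T z' y" using z' by auto
      have "z' \<noteq> v" using wz' y by blast
      have "z' \<noteq> u" using wz' nwu by blast
      have "z' \<noteq> w" "z' \<noteq> y" using wz' irr by metis+
      have "is_cycle T [u,v,w,z',y]"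
        using uv vw wz' uy sym uv' yu yw y \<open>z' \<noteq> v\<close> \<open>z' \<noteq> u\<close> \<open>z' \<noteq> w\<close> \<open>z' \<noteq> y\<close> wu
        by (intro cyc5) auto
      thus False using nocyc by blast
    qed
  next
    case False
    hence uz: "T u z" "T z y" using z by auto
    have "z \<noteq> v" using uz y by blast
    have "z \<noteq> w" using uz nuw by blast
    have "z \<noteq> u" "z \<noteq> y" using uz irr by metis+
    show False
    proof (cases "T w y")
      case True
      have "is_cycle T [u,v,w,y,z]"
        using uv vw uz True sym uv' yu yw y \<open>z \<noteq> v\<close> \<open>z \<noteq> u\<close> \<open>z \<noteq> w\<close> \<open>z \<noteq> y\<close> wu
        by (intro cyc5) auto
      thus False using nocyc by blast
    next
      case False
      hence wz': "T w z'" "T z' y" using z' by auto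
      have "z' \<noteq> v" using wz' y by blast
      have "z' \<noteq> u" using wz' nwu by blast
      have "z' \<noteq> w" "z' \<noteq> y" using wz' irr by metis+
      show False
      proof (cases "z = z'")
        case True
        have "is_cycle T [u,v,w,z]"
          using uv vw uz wz' True sym uv' \<open>z \<noteq> v\<close> \<open>z \<noteq> u\<close> \<open>z \<noteq> w\<close> wu
          by (intro cyc4) auto
        thus False using nocyc by blast
      next
        case False
        have "is_cycle T [u,v,w,z',y,z]"
          using uv vw uz wz' False sym uv' yu yw y \<open>z \<noteq> v\<close> \<open>z \<noteq> u\<close> \<open>z \<noteq> w\<close> \<open>z \<noteq> y\<close>
            \<open>z' \<noteq> v\<close> \<open>z' \<noteq> u\<close> \<open>z' \<noteq> w\<close> \<open>z' \<noteq> y\<close> wu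
          by (intro cyc6) auto
        thus False using nocyc by blast
      qed
    qed
  qed
qed

lemma chord:
  fixes N t \<alpha> l :: real
  assumes "1 \<le> t" "t \<le> N" "0 \<le> \<alpha>" "\<alpha>*N < l"
  shows "(N-1)*(t/(l-\<alpha>*t)) \<le> (N-t)/(l-\<alpha>) + N*(t-1)/(l-\<alpha>*N)"
proof -
  define a where "a = l - \<alpha>"
  define b where "b = l - \<alpha>*N"
  define D where "D = l - \<alpha>*t"
  have "\<alpha>*t \<le> \<alpha>*N" using assms by (intro mult_left_mono) auto
  hence D: "D > 0" using assms unfolding D_def by linarith
  have "\<alpha> \<le> \<alpha>*N" using assms by (metis mult.right_neutral mult_left_mono order.trans)
  hence a: "a > 0" using assms unfolding a_def by linarith
  have b: "b > 0" using assms unfolding b_def by linarith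
  have l0: "l \<ge> 0" using assms \<open>\<alpha> \<le> \<alpha>*N\<close> by linarith
  have eq1: "(N-t)/a + N*(t-1)/b - (N-1)*(t/D) = ((N-t)*b*D + N*(t-1)*a*D - (N-1)*t*a*b)/(a*b*D)"
    using a b D by (simp add: field_simps)
  have eq2: "(N-t)*b*D + N*(t-1)*a*D - (N-1)*t*a*b = (N-1)*\<alpha>*l*(t-1)*(N-t)"
    unfolding a_def b_def D_def by (simp add: algebra_simps)
  have "(N-1)*\<alpha>*l*(t-1)*(N-t) \<ge> 0" using assms l0 by (intro mult_nonneg_nonneg) auto
  hence "((N-t)*b*D + N*(t-1)*a*D - (N-1)*t*a*b)/(a*b*D) \<ge> 0"
    using a b D eq2 by simp
  thus ?thesis using eq1 unfolding a_def b_def D_def by linarith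
qed

lemma ident:
  fixes N k \<alpha> l a b :: real
  assumes a: "a \<noteq> 0" and b: "b \<noteq> 0" and ad: "a = l - \<alpha>" and bd: "b = l - \<alpha>*N"
  shows "(N-1)*(l-\<alpha>*k) - (1-\<alpha>)^2*(N*(k-1)/a + N*(N-k)/b)
       = (a*b - (1-\<alpha>)^2*N) * ((N-k)*a + (k-1)*b) / (a*b)"
proof -
  have e1: "(N-1)*(l-\<alpha>*k) - (1-\<alpha>)^2*(N*(k-1)/a + N*(N-k)/b)
     = ((N-1)*(l-\<alpha>*k)*a*b - (1-\<alpha>)^2*(N*(k-1)*b + N*(N-k)*a))/(a*b)"
    using a b by (simp add: field_simps)
  have e2: "(N-1)*(l-\<alpha>*k)*a*b - (1-\<alpha>)^2*(N*(k-1)*b + N*(N-k)*a) = (a*b - (1-\<alpha>)^2*N) * ((N-k)*a + (k-1)*b)"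
    unfolding ad bd by (simp add: algebra_simps power2_eq_square)
  show ?thesis by (subst e1, subst e2) (rule refl)
qed

lemma sumid:
  fixes N k s a b :: real
  assumes a: "a \<noteq> 0" and b: "b \<noteq> 0"
  shows "(k*N - s)/a + N*(s-k)/b = N*(k-1)/a + N*(N-k)/b - (N-s)*(N/b - 1/a)"
  using a b by (simp add: field_simps)

locale rt =
  fixes N \<alpha> :: real
  assumes N1: "N \<ge> 1" and a0: "0 \<le> \<alpha>" and a1: "\<alpha> \<le> 1"
begin

definition "\<Delta> = \<alpha>^2*(N+1)^2 + 4*N*(1-2*\<alpha>)"
definition "r = (\<alpha>*(N+1) + sqrt \<Delta>)/2"
definition "f l = (l-\<alpha>)*(l-\<alpha>*N) - (1-\<alpha>)^2*N" for l

lemma Delta_eq: "\<Delta> = (\<alpha>*(N-1))^2 + 4*N*(1-\<alpha>)^2"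
  unfolding \<Delta>_def by (simp add: algebra_simps power2_eq_square)

lemma Delta_nn: "\<Delta> \<ge> 0" unfolding Delta_eq using N1 by (intro add_nonneg_nonneg) auto

lemma f_alt: "f l = (l - \<alpha>*(N+1)/2)^2 - \<Delta>/4"
  unfolding f_def \<Delta>_def power2_eq_square by (simp add: field_simps)

lemma f_r: "f r = 0"
proof -
  have "(r - \<alpha>*(N+1)/2)^2 = (sqrt \<Delta>)^2/4" unfolding r_def by (simp add: power2_eq_square field_simps)
  thus ?thesis unfolding f_alt using Delta_nn by simp
qed

lemma le_r: assumes "f l \<le> 0" shows "l \<le> r"
proof -
  have "(l - \<alpha>*(N+1)/2)^2 \<le> (sqrt \<Delta> / 2)^2" using assms Delta_nn unfolding f_alt by (simp add: power_divide)
  hence "l - \<alpha>*(N+1)/2 \<le> sqrt \<Delta> / 2"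
    by (rule power2_le_imp_le) (simp add: Delta_nn)
  thus ?thesis unfolding r_def by simp
qed

lemma sq_ge: "sqrt \<Delta> \<ge> \<alpha>*(N-1)"
proof -
  have "(\<alpha>*(N-1))^2 \<le> \<Delta>" unfolding Delta_eq using N1 by simp
  hence "sqrt ((\<alpha>*(N-1))^2) \<le> sqrt \<Delta>" by (rule real_sqrt_le_mono)
  moreover have "\<alpha>*(N-1) \<ge> 0" using a0 N1 by simp
  ultimately show ?thesis by simp
qed

lemma r_ge: "r \<ge> \<alpha>*N" using sq_ge unfolding r_def by (simp add: algebra_simps)

lemma r_gt: assumes "\<alpha> < 1" shows "r > \<alpha>*N"
proof -
  have "4*N*(1-\<alpha>)^2 > 0" using N1 assms by simp
  hence "(\<alpha>*(N-1))^2 < \<Delta>" unfolding Delta_eq by linarith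
  hence "sqrt ((\<alpha>*(N-1))^2) < sqrt \<Delta>" by (rule real_sqrt_less_mono)
  moreover have "\<alpha>*(N-1) \<ge> 0" using a0 N1 by simp
  ultimately have "sqrt \<Delta> > \<alpha>*(N-1)" by simp
  thus ?thesis unfolding r_def by (simp add: algebra_simps)
qed

lemma r_one: assumes "\<alpha> = 1" shows "r = N"
proof -
  have "\<Delta> = (N-1)^2" unfolding Delta_eq using assms by simp
  hence "sqrt \<Delta> = N - 1" using N1 by simp
  thus ?thesis unfolding r_def using assms by simp
qed

end

lemma mv_formula:
  fixes T :: "'v::finite \<Rightarrow> 'v \<Rightarrow> bool"
  shows "(A_alpha \<alpha> T *v x) $ i = \<alpha> * real (degree T i) * x$i + (1-\<alpha>) * (\<Sum>j\<in>{j. T i j}. x$j)"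
proof -
  have "(A_alpha \<alpha> T *v x) $ i = (\<Sum>j\<in>UNIV. (\<alpha> * (if i = j then real (degree T i) else 0) + (1-\<alpha>) * (if T i j then 1 else 0)) * x$j)"
    by (simp add: A_alpha_def matrix_vector_mult_def deg_matrix_def adj_matrix_def)
  also have "\<dots> = (\<Sum>j\<in>UNIV. (if i = j then \<alpha> * real (degree T i) * x$j else 0) + (if T i j then (1-\<alpha>) * x$j else 0))"
    by (rule sum.cong) (auto simp: algebra_simps)
  also have "\<dots> = (\<Sum>j\<in>UNIV. (if i = j then \<alpha> * real (degree T i) * x$j else 0)) + (\<Sum>j\<in>UNIV. (if T i j then (1-\<alpha>) * x$j else 0))"
    by (rule sum.distrib)
  also have "(\<Sum>j\<in>UNIV. (if i = j then \<alpha> * real (degree T i) * x$j else 0)) = \<alpha> * real (degree T i) * x$i"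
    by (simp add: sum.delta)
  also have "(\<Sum>j\<in>UNIV. (if T i j then (1-\<alpha>) * x$j else 0)) = (\<Sum>j\<in>{j. T i j}. (1-\<alpha>) * x$j)"
    by (simp add: sum.inter_filter[symmetric])
  also have "\<dots> = (1-\<alpha>) * (\<Sum>j\<in>{j. T i j}. x$j)" by (simp add: sum_distrib_left)
  finally show ?thesis .
qed

lemma A_sym:
  fixes T :: "'v::finite \<Rightarrow> 'v \<Rightarrow> bool"
  assumes "is_tree T"
  shows "transpose (A_alpha \<alpha> T) = A_alpha \<alpha> T"
  unfolding transpose_def A_alpha_def deg_matrix_def adj_matrix_def
  using tree_sym[OF assms] by (auto simp: vec_eq_iff)

lemma real_deg_bounds:
  fixes T :: "'v::finite \<Rightarrow> 'v \<Rightarrow> bool"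
  assumes tree: "is_tree T" and n2: "CARD('v) \<ge> 2"
  shows "1 \<le> real (degree T v)" "real (degree T v) \<le> real CARD('v) - 1"
proof -
  show "1 \<le> real (degree T v)" using deg_ge1[OF tree n2] by simp
  have "degree T v \<le> CARD('v) - 1" by (rule deg_le[OF tree])
  thus "real (degree T v) \<le> real CARD('v) - 1" using n2 by (simp add: of_nat_diff)
qed

lemma sum_le_card_max:
  fixes x :: "real^'v::finite"
  assumes "\<And>i. x$i \<le> m"
  shows "(\<Sum>j\<in>A. x$j) \<le> real (card A) * m"
proof -
  have "(\<Sum>j\<in>A. x$j) \<le> (\<Sum>j\<in>A. m)" using assms by (intro sum_mono) auto
  thus ?thesis by simp
qed

lemma xv_bound:
  fixes T :: "'v::finite \<Rightarrow> 'v \<Rightarrow> bool" and x :: "real^'v"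
  assumes eig: "\<And>i. l * x$i = \<alpha> * real (degree T i) * x$i + (1-\<alpha>) * (\<Sum>j\<in>{j. T i j}. x$j)"
    and mx: "\<And>i. x$i \<le> m" and a1: "\<alpha> \<le> 1"
    and pos: "l - \<alpha> * real (degree T v) > 0"
  shows "x$v \<le> (1-\<alpha>) * m * (real (degree T v) / (l - \<alpha> * real (degree T v)))"
proof -
  have "(l - \<alpha> * real (degree T v)) * x$v = (1-\<alpha>) * (\<Sum>j\<in>{j. T v j}. x$j)"
    using eig[of v] by (simp add: algebra_simps)
  also have "\<dots> \<le> (1-\<alpha>) * (real (degree T v) * m)"
    using sum_le_card_max[of x m "{j. T v j}", OF mx] a1 unfolding degree_def
    by (intro mult_left_mono) auto
  finally have "(l - \<alpha> * real (degree T v)) * x$v \<le> (1-\<alpha>) * (real (degree T v) * m)" .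
  thus ?thesis using pos by (simp add: field_simps)
qed

lemma bound_core:
  fixes T :: "'v::finite \<Rightarrow> 'v \<Rightarrow> bool" and x :: "real^'v"
  assumes tree: "is_tree T" and n2: "CARD('v) \<ge> 2" and a0: "0 \<le> \<alpha>" and a1: "\<alpha> \<le> 1"
    and eig: "\<And>i. l * x$i = \<alpha> * real (degree T i) * x$i + (1-\<alpha>) * (\<Sum>j\<in>{j. T i j}. x$j)"
    and pos: "x$u > 0" and mx: "\<And>i. \<bar>x$i\<bar> \<le> x$u"
    and Ndef: "N = real CARD('v) - 1"
  shows "l \<le> rt.r N \<alpha>"
proof -
  have N1: "N \<ge> 1" using n2 Ndef by simp
  interpret rt N \<alpha> using N1 a0 a1 by unfold_locales
  show ?thesis
  proof (cases "l \<le> \<alpha>*N")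
    case True thus ?thesis using r_ge by linarith
  next
    case False
    hence lN: "\<alpha>*N < l" by simp
    define m where "m = x$u"
    define d where "d v = real (degree T v)" for v
    define a where "a = l - \<alpha>"
    define b where "b = l - \<alpha>*N"
    define nb where "nb = {v. T u v}"
    define k where "k = d u"
    define s where "s = (\<Sum>v\<in>nb. d v)"
    define G where "G = (\<Sum>v\<in>nb. d v / (l - \<alpha> * d v))"
    define C where "C = N*(k-1)/a + N*(N-k)/b"
    have m0: "m > 0" using pos m_def by simp
    have mxm: "\<And>i. x$i \<le> m" using mx m_def by (metis abs_ge_self order.trans)
    have dge: "\<And>v. 1 \<le> d v" and dle: "\<And>v. d v \<le> N"
      using real_deg_bounds[OF tree n2] Ndef d_def by auto
    have "\<alpha> \<le> \<alpha>*N" using a0 N1 by (metis mult.right_neutral mult_left_mono)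
    hence a: "a > 0" and b: "b > 0" and ab: "b \<le> a" using lN a_def b_def by auto
    have dpos: "\<And>v. l - \<alpha> * d v > 0"
    proof -
      fix v have "\<alpha> * d v \<le> \<alpha> * N" using dle a0 by (intro mult_left_mono) auto
      thus "l - \<alpha> * d v > 0" using lN by linarith
    qed
    have xv: "\<And>v. x$v \<le> (1-\<alpha>) * m * (d v / (l - \<alpha> * d v))"
    proof -
      fix v show "x$v \<le> (1-\<alpha>) * m * (d v / (l - \<alpha> * d v))"
        using xv_bound[OF eig mxm a1 dpos[of v, unfolded d_def]] unfolding d_def .
    qed
    have P: "(l - \<alpha>*k) * m = (1-\<alpha>) * (\<Sum>v\<in>nb. x$v)"
      using eig[of u] unfolding k_def d_def nb_def m_def by (simp add: algebra_simps)
    have "(\<Sum>v\<in>nb. x$v) \<le> (\<Sum>v\<in>nb. (1-\<alpha>) * m * (d v / (l - \<alpha> * d v)))"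
      using xv by (intro sum_mono) auto
    also have "\<dots> = (1-\<alpha>) * m * G" unfolding G_def by (simp add: sum_distrib_left)
    finally have PG: "(\<Sum>v\<in>nb. x$v) \<le> (1-\<alpha>) * m * G" .
    have "(l - \<alpha>*k) * m \<le> (1-\<alpha>) * ((1-\<alpha>) * m * G)"
      unfolding P using PG a1 by (intro mult_left_mono) auto
    hence "(l - \<alpha>*k) * m \<le> ((1-\<alpha>)^2 * G) * m" by (simp add: power2_eq_square algebra_simps)
    hence chain: "l - \<alpha>*k \<le> (1-\<alpha>)^2 * G" using m0 by simp
    have cardnb: "real (card nb) = k" unfolding k_def d_def degree_def nb_def by simp
    show ?thesis
    proof (cases "N \<le> 1")
      case True
      hence N1': "N = 1" using N1 by simp
      have d1: "\<And>v. d v = 1" using dge dle N1' by (metis order_antisym)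
      have "G = k / (l - \<alpha>)" unfolding G_def d1 using cardnb by simp
      moreover have "k = 1" using d1 k_def by simp
      ultimately have "a \<le> (1-\<alpha>)^2 / a" using chain a_def by simp
      hence "a * a \<le> (1-\<alpha>)^2" using a by (simp add: field_simps)
      hence "f l \<le> 0" unfolding f_def using N1' a_def by (simp add: power2_eq_square)
      thus ?thesis by (rule le_r)
    next
      case False
      hence N2: "N > 1" by simp
      have chord_v: "(N-1) * (d v / (l - \<alpha> * d v)) \<le> (N - d v)/a + N*(d v - 1)/b" for v
        unfolding a_def b_def using chord[OF dge dle a0 lN] .
      have "(N-1) * G = (\<Sum>v\<in>nb. (N-1) * (d v / (l - \<alpha> * d v)))"
        unfolding G_def by (simp add: sum_distrib_left)
      also have "\<dots> \<le> (\<Sum>v\<in>nb. (N - d v)/a + N*(d v - 1)/b)"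
        using chord_v by (intro sum_mono) auto
      also have "\<dots> = (k*N - s)/a + N*(s-k)/b"
        unfolding s_def using cardnb
        by (simp add: sum.distrib sum_divide_distrib[symmetric] sum_subtractf sum_distrib_left[symmetric] algebra_simps)
      also have "\<dots> = C - (N-s)*(N/b - 1/a)"
        unfolding C_def using sumid[of a b k N s] a b by simp
      finally have GC: "(N-1) * G \<le> C - (N-s)*(N/b - 1/a)" .
      have sN: "s \<le> N"
      proof -
        have "(\<Sum>v\<in>nb. degree T v) \<le> CARD('v) - 1" unfolding nb_def by (rule sum_deg_le[OF tree])
        hence "real (\<Sum>v\<in>nb. degree T v) \<le> real (CARD('v) - 1)" by linarith
        thus ?thesis unfolding s_def d_def Ndef using n2 by (simp add: of_nat_diff)
      qed
      have "N/b - 1/a \<ge> 0"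
      proof -
        have "1/a \<le> 1/b" using a b ab by (simp add: frac_le)
        also have "\<dots> \<le> N/b" using b N1 by (simp add: divide_right_mono)
        finally show ?thesis by simp
      qed
      hence "(N-s)*(N/b - 1/a) \<ge> 0" using sN by simp
      hence GC2: "(N-1) * G \<le> C" using GC by linarith
      have "(N-1)*(l-\<alpha>*k) \<le> (N-1)*((1-\<alpha>)^2 * G)" using chain N2 by (intro mult_left_mono) auto
      also have "\<dots> = (1-\<alpha>)^2 * ((N-1) * G)" by simp
      also have "\<dots> \<le> (1-\<alpha>)^2 * C" using GC2 by (intro mult_left_mono) auto
      finally have "(N-1)*(l-\<alpha>*k) - (1-\<alpha>)^2 * C \<le> 0" by simp
      hence fQ: "(a*b - (1-\<alpha>)^2*N) * ((N-k)*a + (k-1)*b) / (a*b) \<le> 0"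
        unfolding C_def using ident[of a b l \<alpha> N k] a b a_def b_def by simp
      have "(N-k)*a \<ge> (N-k)*b" using ab dle k_def by (intro mult_left_mono) auto
      moreover have "(N-k)*b + (k-1)*b = (N-1)*b" by (simp add: algebra_simps)
      moreover have "(N-1)*b > 0" using N2 b by simp
      ultimately have Q: "(N-k)*a + (k-1)*b > 0" by linarith
      have "a*b - (1-\<alpha>)^2*N \<le> 0"
      proof (rule ccontr)
        assume "\<not> ?thesis"
        hence "(a*b - (1-\<alpha>)^2*N) * ((N-k)*a + (k-1)*b) / (a*b) > 0" using Q a b by simp
        thus False using fQ by simp
      qed
      hence "f l \<le> 0" unfolding f_def a_def b_def .
      thus ?thesis by (rule le_r)
    qed
  qed
qed

lemma tight_core:
  fixes T :: "'v::finite \<Rightarrow> 'v \<Rightarrow> bool" and x :: "real^'v"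
  assumes tree: "is_tree T" and n3: "CARD('v) \<ge> 3" and a0: "0 \<le> \<alpha>" and al1: "\<alpha> < 1"
    and eig: "\<And>i. l * x$i = \<alpha> * real (degree T i) * x$i + (1-\<alpha>) * (\<Sum>j\<in>{j. T i j}. x$j)"
    and pos: "x$u > 0" and mx: "\<And>i. \<bar>x$i\<bar> \<le> x$u"
    and Ndef: "N = real CARD('v) - 1" and lr: "l = rt.r N \<alpha>"
  shows "(\<Sum>v\<in>{v. T u v}. degree T v) = CARD('v) - 1"
    and "\<And>v w. T u v \<Longrightarrow> T v w \<Longrightarrow> x$w = x$u"
proof -
  have n2: "CARD('v) \<ge> 2" using n3 by simp
  have N2: "N \<ge> 2" using n3 Ndef by simp
  have N1: "N \<ge> 1" using N2 by simp
  interpret rt N \<alpha> using N1 a0 al1 by unfold_locales auto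
  have lN: "\<alpha>*N < l" using r_gt[OF al1] lr by simp
  have fl: "f l = 0" using f_r lr by simp
  define m where "m = x$u"
  define d where "d v = real (degree T v)" for v
  define a where "a = l - \<alpha>"
  define b where "b = l - \<alpha>*N"
  define nb where "nb = {v. T u v}"
  define k where "k = d u"
  define s where "s = (\<Sum>v\<in>nb. d v)"
  define g where "g v = d v / (l - \<alpha> * d v)" for v
  define G where "G = (\<Sum>v\<in>nb. g v)"
  define C where "C = N*(k-1)/a + N*(N-k)/b"
  define Px where "Px = (\<Sum>v\<in>nb. x$v)"
  have m0: "m > 0" using pos m_def by simp
  have mxm: "\<And>i. x$i \<le> m" using mx m_def by (metis abs_ge_self order.trans)
  have dge: "\<And>v. 1 \<le> d v" and dle: "\<And>v. d v \<le> N"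
    using real_deg_bounds[OF tree n2] Ndef d_def by auto
  have "\<alpha> \<le> \<alpha>*N" using a0 N1 by (metis mult.right_neutral mult_left_mono)
  hence a: "a > 0" and b: "b > 0" and ab: "b \<le> a" using lN a_def b_def by auto
  have l0: "l > 0" using lN a0 N1 by (smt (verit) mult_nonneg_nonneg)
  have dpos: "\<And>v. l - \<alpha> * d v > 0"
  proof -
    fix v have "\<alpha> * d v \<le> \<alpha> * N" using dle a0 by (intro mult_left_mono) auto
    thus "l - \<alpha> * d v > 0" using lN by linarith
  qed
  have xv: "\<And>v. x$v \<le> (1-\<alpha>) * m * g v"
  proof -
    fix v show "x$v \<le> (1-\<alpha>) * m * g v"
      using xv_bound[OF eig mxm less_imp_le[OF al1] dpos[of v, unfolded d_def]] unfolding d_def g_def .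
  qed
  have P: "(l - \<alpha>*k) * m = (1-\<alpha>) * Px"
    using eig[of u] unfolding k_def d_def nb_def m_def Px_def by (simp add: algebra_simps)
  have "Px \<le> (\<Sum>v\<in>nb. (1-\<alpha>) * m * g v)"
    unfolding Px_def using xv by (intro sum_mono) auto
  also have "\<dots> = (1-\<alpha>) * m * G" unfolding G_def by (simp add: sum_distrib_left)
  finally have PG: "Px \<le> (1-\<alpha>) * m * G" .
  have cardnb: "real (card nb) = k" unfolding k_def d_def degree_def nb_def by simp
  have chord_v: "(N-1) * g v \<le> (N - d v)/a + N*(d v - 1)/b" for v
    unfolding a_def b_def g_def using chord[OF dge dle a0 lN] .
  have "(N-1) * G = (\<Sum>v\<in>nb. (N-1) * g v)"
    unfolding G_def by (simp add: sum_distrib_left)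
  also have "\<dots> \<le> (\<Sum>v\<in>nb. (N - d v)/a + N*(d v - 1)/b)"
    using chord_v by (intro sum_mono) auto
  also have "\<dots> = (k*N - s)/a + N*(s-k)/b"
    unfolding s_def using cardnb
    by (simp add: sum.distrib sum_divide_distrib[symmetric] sum_subtractf sum_distrib_left[symmetric] algebra_simps)
  also have "\<dots> = C - (N-s)*(N/b - 1/a)"
    unfolding C_def using sumid[of a b k N s] a b by simp
  finally have GC: "(N-1) * G \<le> C - (N-s)*(N/b - 1/a)" .
  have sN: "s \<le> N"
  proof -
    have "(\<Sum>v\<in>nb. degree T v) \<le> CARD('v) - 1" unfolding nb_def by (rule sum_deg_le[OF tree])
    hence "real (\<Sum>v\<in>nb. degree T v) \<le> real (CARD('v) - 1)" by linarith
    thus ?thesis unfolding s_def d_def Ndef using n2 by (simp add: of_nat_diff)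
  qed
  have NBA: "N/b - 1/a > 0"
  proof -
    have "1/a \<le> 1/b" using a b ab by (simp add: frac_le)
    also have "\<dots> < N/b" using b N2 by (simp add: divide_strict_right_mono)
    finally show ?thesis by simp
  qed
  define Z where "Z = (N-s)*(N/b - 1/a)"
  have Z0: "Z \<ge> 0" unfolding Z_def using sN NBA by simp
  have idE: "(N-1)*(l-\<alpha>*k) - (1-\<alpha>)^2 * C = 0"
    unfolding C_def using ident[of a b l \<alpha> N k] a b a_def b_def fl unfolding f_def by simp
  define K where "K = (1-\<alpha>)^2 * m"
  have K0: "K > 0" unfolding K_def using al1 m0 by simp
  have e1: "(1-\<alpha>)*(N-1)*Px = K * C"
  proof -
    have "(1-\<alpha>)*(N-1)*Px = (N-1)*((1-\<alpha>)*Px)" by (simp add: algebra_simps)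
    also have "\<dots> = (N-1)*((l - \<alpha>*k) * m)" using P by simp
    also have "\<dots> = ((N-1)*(l-\<alpha>*k)) * m" by simp
    also have "\<dots> = ((1-\<alpha>)^2 * C) * m" using idE by simp
    finally show ?thesis unfolding K_def by (simp add: algebra_simps)
  qed
  have e2: "K * C \<ge> K * ((N-1)*G + Z)" using GC K0 unfolding Z_def by (intro mult_left_mono) auto
  have e3: "(1-\<alpha>)*(N-1)*Px \<le> K * ((N-1) * G)"
  proof -
    have "(1-\<alpha>)*(N-1)*Px \<le> (1-\<alpha>)*(N-1)*((1-\<alpha>) * m * G)"
      using PG al1 N2 by (intro mult_left_mono) auto
    thus ?thesis unfolding K_def by (simp add: algebra_simps power2_eq_square)
  qed
  have "K * Z \<le> 0" using e1 e2 e3 by (simp add: algebra_simps)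
  hence "Z \<le> 0" using K0 by (simp add: mult_le_0_iff)
  hence "Z = 0" using Z0 by simp
  hence sEq: "s = N" using NBA unfolding Z_def by simp
  have "K * ((N-1)*G) \<le> (1-\<alpha>)*(N-1)*Px" using e1 e2 Z0 K0 by (smt (verit) mult_left_mono)
  hence "((1-\<alpha>)*(N-1)) * ((1-\<alpha>) * m * G) \<le> ((1-\<alpha>)*(N-1)) * Px"
    unfolding K_def by (simp add: algebra_simps power2_eq_square)
  moreover have "(1-\<alpha>)*(N-1) > 0" using al1 N2 by simp
  ultimately have "(1-\<alpha>) * m * G \<le> Px" by (rule mult_left_le_imp_le)
  hence PxEq: "Px = (\<Sum>v\<in>nb. (1-\<alpha>) * m * g v)" using PG unfolding G_def by (simp add: sum_distrib_left)
  have "(\<Sum>v\<in>nb. (1-\<alpha>) * m * g v - x$v) = 0"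
    using PxEq unfolding Px_def by (simp add: sum_subtractf)
  hence xeq: "\<And>v. v \<in> nb \<Longrightarrow> x$v = (1-\<alpha>) * m * g v"
    using xv by (subst (asm) sum_nonneg_eq_0_iff) auto
  show "(\<Sum>v\<in>{v. T u v}. degree T v) = CARD('v) - 1"
  proof -
    have "real (\<Sum>v\<in>nb. degree T v) = N" using sEq unfolding s_def d_def by simp
    hence "real (\<Sum>v\<in>nb. degree T v) = real (CARD('v) - 1)" using Ndef n2 by (simp add: of_nat_diff)
    thus ?thesis unfolding nb_def by (simp only: of_nat_eq_iff)
  qed
  fix v w assume uv: "T u v" and vw: "T v w"
  have vnb: "v \<in> nb" using uv nb_def by simp
  have "(l - \<alpha> * d v) * x$v = (1-\<alpha>) * (\<Sum>j\<in>{j. T v j}. x$j)"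
    using eig[of v] unfolding d_def by (simp add: algebra_simps)
  moreover have "(l - \<alpha> * d v) * x$v = (1-\<alpha>) * (d v * m)"
    using xeq[OF vnb] dpos[of v] unfolding g_def by (simp add: field_simps)
  ultimately have "(\<Sum>j\<in>{j. T v j}. x$j) = d v * m" using al1 by simp
  hence "(\<Sum>j\<in>{j. T v j}. m - x$j) = 0" unfolding d_def degree_def by (simp add: sum_subtractf)
  moreover have "\<And>j. m - x$j \<ge> 0" using mxm by simp
  ultimately have "\<And>j. j \<in> {j. T v j} \<Longrightarrow> m - x$j = 0"
    by (subst (asm) sum_nonneg_eq_0_iff) auto
  hence "m - x$w = 0" using vw by simp
  thus "x$w = x$u" unfolding m_def by simp
qed

lemma eig_core:
  fixes T :: "'v::finite \<Rightarrow> 'v \<Rightarrow> bool" and x :: "real^'v"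
  assumes tree: "is_tree T" and n2: "CARD('v) \<ge> 2" and a0: "0 \<le> \<alpha>" and al1: "\<alpha> \<le> 1"
    and x0: "x \<noteq> 0" and ev: "A_alpha \<alpha> T *v x = l *\<^sub>R x"
    and Ndef: "N = real CARD('v) - 1"
  shows "l \<le> rt.r N \<alpha> \<and> (l = rt.r N \<alpha> \<longrightarrow> is_star T)"
proof -
  let ?S = "(\<lambda>i. \<bar>x$i\<bar>) ` UNIV"
  have "Max ?S \<in> ?S" by (intro Max_in) auto
  then obtain u where u: "Max ?S = \<bar>x$u\<bar>" by blast
  have umax: "\<And>i. \<bar>x$i\<bar> \<le> \<bar>x$u\<bar>" unfolding u[symmetric] by (intro Max_ge) auto
  have xu0: "x$u \<noteq> 0"
  proof
    assume "x$u = 0"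
    hence "\<And>i. x$i = 0" using umax by (metis abs_0 abs_le_zero_iff)
    hence "x = 0" by (simp add: vec_eq_iff)
    thus False using x0 by simp
  qed
  define y where "y = (if x$u > 0 then x else (-1) *\<^sub>R x)"
  have neg: "A_alpha \<alpha> T *v ((-1) *\<^sub>R x) = (-1) *\<^sub>R (A_alpha \<alpha> T *v x)"
    by (simp add: vec_eq_iff matrix_vector_mult_def sum_negf)
  have ey: "A_alpha \<alpha> T *v y = l *\<^sub>R y"
    unfolding y_def using ev neg by simp
  have yu: "y$u > 0" unfolding y_def using xu0 by auto
  have ymx: "\<And>i. \<bar>y$i\<bar> \<le> y$u" unfolding y_def using umax xu0 by auto
  have eigy: "\<And>i. l * y$i = \<alpha> * real (degree T i) * y$i + (1-\<alpha>) * (\<Sum>j\<in>{j. T i j}. y$j)"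
  proof -
    fix i
    have "l * y$i = (A_alpha \<alpha> T *v y) $ i" using ey by simp
    thus "l * y$i = \<alpha> * real (degree T i) * y$i + (1-\<alpha>) * (\<Sum>j\<in>{j. T i j}. y$j)"
      by (simp add: mv_formula)
  qed
  have N1: "N \<ge> 1" using n2 Ndef by simp
  interpret rt N \<alpha> using N1 a0 al1 by unfold_locales
  have part1: "l \<le> r" using bound_core[OF tree n2 a0 al1 eigy yu ymx Ndef] .
  have part2: "is_star T" if lr: "l = r"
  proof (cases "\<alpha> = 1")
    case True
    have "l * y$u = real (degree T u) * y$u" using eigy[of u] True by simp
    hence "l = real (degree T u)" using yu by simp
    hence "real (degree T u) = real (CARD('v) - 1)" using r_one[OF True] lr Ndef n2 by (simp add: of_nat_diff)
    hence "degree T u = CARD('v) - 1" by (simp only: of_nat_eq_iff)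
    thus ?thesis by (rule deg_full_star[OF tree])
  next
    case False
    hence al: "\<alpha> < 1" using al1 by simp
    show ?thesis
    proof (cases "CARD('v) = 2")
      case True
      have "degree T u \<ge> 1" by (rule deg_ge1[OF tree n2])
      moreover have "degree T u \<le> CARD('v) - 1" by (rule deg_le[OF tree])
      ultimately have "degree T u = CARD('v) - 1" using True by simp
      thus ?thesis by (rule deg_full_star[OF tree])
    next
      case False
      hence n3: "CARD('v) \<ge> 3" using n2 by simp
      note tu = tight_core[OF tree n3 a0 al eigy yu ymx Ndef lr]
      show ?thesis
      proof (cases "\<forall>w. w \<noteq> u \<longrightarrow> T u w")
        case True thus ?thesis using centre_star[OF tree, of u] by blast
      next
        case False
        then obtain w where w: "w \<noteq> u" "\<not> T u w" by blast
        have Ru: "\<And>z. z = u \<or> T u z \<or> (\<exists>v. T u v \<and> T v z)" using sum_deg_eq[OF tree tu(1)] by blast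
        obtain v where uv: "T u v" and vw: "T v w" using Ru[of w] w by blast
        have ywu: "y$w = y$u" using tu(2)[OF uv vw] .
        have yw: "y$w > 0" using yu ywu by simp
        have ymxw: "\<And>i. \<bar>y$i\<bar> \<le> y$w" using ymx ywu by simp
        note tw = tight_core[OF tree n3 a0 al eigy yw ymxw Ndef lr]
        have Rw: "\<And>z. z = w \<or> T w z \<or> (\<exists>v. T w v \<and> T v z)" using sum_deg_eq[OF tree tw(1)] by blast
        show ?thesis by (rule dist2_star[OF tree Ru Rw uv vw w(2) w(1)])
      qed
    qed
  qed
  show ?thesis using part1 part2 by blast
qed

lemma star_eig:
  fixes T :: "'v::finite \<Rightarrow> 'v \<Rightarrow> bool"
  assumes st: "is_star T" and n2: "CARD('v) \<ge> 2" and a0: "0 \<le> \<alpha>" and al1: "\<alpha> \<le> 1"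
    and Ndef: "N = real CARD('v) - 1"
  shows "\<exists>x. x \<noteq> 0 \<and> A_alpha \<alpha> T *v x = rt.r N \<alpha> *\<^sub>R x"
proof -
  obtain c where c: "\<And>u v. T u v \<longleftrightarrow> u \<noteq> v \<and> (u = c \<or> v = c)"
    using st unfolding is_star_def by blast
  have N1: "N \<ge> 1" using n2 Ndef by simp
  interpret rt N \<alpha> using N1 a0 al1 by unfold_locales
  have nbc: "{j. T c j} = UNIV - {c}" using c by auto
  have nbj: "\<And>i. i \<noteq> c \<Longrightarrow> {j. T i j} = {c}" using c by auto
  have cc: "real (card (UNIV - {c} :: 'v set)) = N" using Ndef n2 by (simp add: card_Diff_singleton of_nat_diff)
  have dc: "real (degree T c) = N" unfolding degree_def nbc using cc .
  have dj: "\<And>i. i \<noteq> c \<Longrightarrow> real (degree T i) = 1" unfolding degree_def using nbj by simp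
  obtain j :: 'v where jc: "j \<noteq> c"
  proof -
    have "real (card (UNIV - {c} :: 'v set)) \<ge> 1" using cc N1 by simp
    hence "0 < card (UNIV - {c} :: 'v set)" by simp
    moreover have "card (UNIV - {c} :: 'v set) = 0" if e: "UNIV - {c} = {}" by (subst e) simp
    ultimately have "UNIV - {c} \<noteq> {}" by linarith
    thus ?thesis using that by blast
  qed
  show ?thesis
  proof (cases "\<alpha> = 1")
    case True
    define x :: "real^'v" where "x = (\<chi> i. if i = c then 1 else 0)"
    have xc: "x$c = 1" unfolding x_def by simp
    have "x \<noteq> 0"
    proof
      assume "x = 0" hence "x$c = 0" by simp
      thus False using xc by simp
    qed
    moreover have "A_alpha \<alpha> T *v x = r *\<^sub>R x"
    proof (subst vec_eq_iff, intro allI)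
      fix i show "(A_alpha \<alpha> T *v x) $ i = (r *\<^sub>R x) $ i"
        unfolding mv_formula using True r_one[OF True] dc by (simp add: x_def)
    qed
    ultimately show ?thesis by blast
  next
    case False
    define x :: "real^'v" where "x = (\<chi> i. if i = c then r - \<alpha> else 1 - \<alpha>)"
    have xj: "x$j \<noteq> 0" unfolding x_def using jc False by simp
    have "x \<noteq> 0"
    proof
      assume "x = 0" hence "x$j = 0" by simp
      thus False using xj by simp
    qed
    moreover have "A_alpha \<alpha> T *v x = r *\<^sub>R x"
    proof (subst vec_eq_iff, intro allI)
      fix i show "(A_alpha \<alpha> T *v x) $ i = (r *\<^sub>R x) $ i"
      proof (cases "i = c")
        case True
        have s: "(\<Sum>j\<in>UNIV - {c}. x$j) = N * (1 - \<alpha>)" unfolding x_def using cc by simp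
        have "(r - \<alpha>)*(r - \<alpha>*N) = (1-\<alpha>)^2*N" using f_r unfolding f_def by simp
        hence "\<alpha> * N * (r - \<alpha>) + (1-\<alpha>) * (N * (1-\<alpha>)) = r * (r - \<alpha>)"
          by (simp add: algebra_simps power2_eq_square)
        thus ?thesis unfolding mv_formula True nbc s dc by (simp add: x_def)
      next
        case False
        have s: "(\<Sum>j\<in>{j. T i j}. x$j) = r - \<alpha>" unfolding nbj[OF False] x_def by simp
        show ?thesis unfolding mv_formula s dj[OF False] using False
          by (simp add: x_def algebra_simps)
      qed
    qed
    ultimately show ?thesis by blast
  qed
qed

theorem theorem2:
  fixes T :: "'v::finite \<Rightarrow> 'v \<Rightarrow> bool" and \<alpha> :: real
  assumes "CARD('v) \<ge> 2" and "0 \<le> \<alpha>" and "\<alpha> \<le> 1" and "is_tree T"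
  shows "spectral_radius_sym (A_alpha \<alpha> T)
           \<le> (\<alpha> * real CARD('v) + sqrt (\<alpha>\<^sup>2 * (real CARD('v))\<^sup>2
                + 4 * (real CARD('v) - 1) * (1 - 2 * \<alpha>))) / 2
    \<and> (spectral_radius_sym (A_alpha \<alpha> T)
           = (\<alpha> * real CARD('v) + sqrt (\<alpha>\<^sup>2 * (real CARD('v))\<^sup>2
                + 4 * (real CARD('v) - 1) * (1 - 2 * \<alpha>))) / 2
         \<longleftrightarrow> is_star T)"
proof -
  define N where "N = real CARD('v) - 1"
  have N1: "N \<ge> 1" using assms(1) N_def by simp
  interpret rt N \<alpha> using N1 assms(2,3) by unfold_locales
  have rdef: "(\<alpha> * real CARD('v) + sqrt (\<alpha>\<^sup>2 * (real CARD('v))\<^sup>2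
                + 4 * (real CARD('v) - 1) * (1 - 2 * \<alpha>))) / 2 = r"
  proof -
    have e: "real CARD('v) = N + 1" by (simp add: N_def)
    show ?thesis unfolding e by (simp add: r_def \<Delta>_def)
  qed
  let ?M = "A_alpha \<alpha> T"
  let ?S = "{l. \<exists>x. x \<noteq> 0 \<and> ?M *v x = l *\<^sub>R x}"
  have fin: "finite ?S" by (rule sym_eigen_finite[OF A_sym[OF assms(4)]])
  have ne: "?S \<noteq> {}" using sym_eigen_exists[OF A_sym[OF assms(4)]] by blast
  have inS: "spectral_radius_sym ?M \<in> ?S" unfolding spectral_radius_sym_def by (rule Max_in[OF fin ne])
  then obtain x where x: "x \<noteq> 0" "?M *v x = spectral_radius_sym ?M *\<^sub>R x" by blast
  have core: "spectral_radius_sym ?M \<le> r \<and> (spectral_radius_sym ?M = r \<longrightarrow> is_star T)"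
    using eig_core[OF assms(4) assms(1) assms(2) assms(3) x(1) x(2) N_def] .
  have star: "spectral_radius_sym ?M = r" if st: "is_star T"
  proof -
    obtain y where "y \<noteq> 0" "?M *v y = r *\<^sub>R y" using star_eig[OF st assms(1) assms(2) assms(3) N_def] by blast
    hence "r \<in> ?S" by blast
    hence "r \<le> spectral_radius_sym ?M" unfolding spectral_radius_sym_def by (rule Max_ge[OF fin])
    thus ?thesis using core by simp
  qed
  show ?thesis unfolding rdef using core star by blast
qed

end
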